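(* Let $(X,S)$ be an association scheme of order $n>1$ and let $H_1,H_2$ be $n\times n$ Hadamard matrices whose rows and columns are indexed by $X$. Then the association schemes $(\widetilde X,S(H_1))$ and $(\widetilde X,S(H_2))$ are isomorphic if and only if $H_1$ is similar to $H_2$ with respect to $(X,S)$, i.e. there exist $P',Q'\in\mathrm{D}$ and $P,Q\in\mathrm{I}$ such that either $H_2=(P'P)^{-1}H_1Q'Q$ or $H_2^T=(P'P)^{-1}H_1Q'Q$, and moreover $(P'P)^{-1}Q'Q\in\mathrm{D}\rtimes\mathcal{P}(\mathrm{Aut}(X,S))$.
   Context: An association scheme $(X,S)$ consists of a non-empty finite set $X$ and a partition $S$ of $X\times X$ such that: $1_X:=\{(\alpha,\alpha)\mid \alpha\in X\}\in S$; for each $s\in S$, $s^*:=\{(\alpha,\beta)\mid(\beta,\alpha)\in s\}\in S$; and for all $s,t,u\in S$ the number $|\alpha s\cap \beta t^*|$ is constant for $(\alpha,\beta)\in u$, where $\alpha s:=\{\beta\mid(\alpha,\beta)\in s\}$. An isomorphism from a scheme $(X,S)$ to a scheme $(X_1,S_1)$ is a bijection $\phi:X\to X_1$ such that $s\mapsto \phi(s)=\{(\phi(x),\phi(y))\mid (x,y)\in s\}$ is a bijection $S\to S_1$. $\mathrm{Iso}(X,S)$ is the group of isomorphisms from $(X,S)$ to itself (permutations $\sigma$ of $X$ with $\sigma(s)\in S$ for all $s\in S$), and $\mathrm{Aut}(X,S)$ is its subgroup of those $\sigma$ with $\sigma(s)=s$ for all $s\in S$. For a permutation $\sigma$ of $X$,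 $P_\sigma$ is its permutation matrix (indexed by $X$), and for a permutation group $G$, $\mathcal P(G)=\{P_\sigma\mid\sigma\in G\}$. $\mathrm{I}:=\mathcal P(\mathrm{Iso}(X,S))$. $D_x$ is the diagonal matrix indexed by $X$ with $(x,x)$-entry $-1$ and other diagonal entries $1$, and $\mathrm{D}:=\langle D_x\mid x\in X\rangle$ (all diagonal $\pm1$ matrices). $\mathbb{F}_2$ is the field with two elements, and $x_{ab}$ denotes the element $(x,a,b)$ of $X\times\mathbb{F}_2\times\mathbb{F}_2$. For a matrix $H$ indexed by $X$, let $H^{T(0)}=H$ and $H^{T(1)}=H^T$, and let $\delta_{ac}=1$ if $a=c$ and $0$ otherwise. Define $\widetilde X=\{x_{ab}\mid x\in X,\ a,b\in\mathbb{F}_2\}$; $\widetilde t=\{(x_{ab},x_{a(b+1)})\mid x\in X,\ a,b\in\mathbb{F}_2\}$; for $s\in S\setminus\{1_X\}$, $\widetilde s=\{(x_{ab},y_{ac})\mid (x,y)\in s,\ a,b,c\in\mathbb{F}_2\}$; $r^1_H=\{(x_{ab},y_{cd})\mid x,y\in X,\ a,b,c,d\in\mathbb{F}_2,\ (1-\delta_{ac})(H^{T(a)})_{xy}=(-1)^{b+d}\}$; $r^{-1}_H=\{(x_{ab},y_{cd})\mid x,y\in X,\ a,b,c,d\in\mathbb{F}_2,\ a\ne c\}\setminus r^1_H$; $S(H)=\{1_{\widetilde X},\widetilde t\}\cup\{\widetilde s\mid s\in S\setminus\{1_X\}\}\cup\{r^1_H,r^{-1}_H\}$. (This is an association scheme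 for every Hadamard matrix $H$ indexed by $X$.) *)

theory Defs
  imports "HOL-Analysis.Analysis"
begin

definition assoc_scheme :: "'a set \<Rightarrow> ('a \<times> 'a) set set \<Rightarrow> bool" where
  "assoc_scheme X S \<longleftrightarrow>
     X \<noteq> {} \<and> finite X \<and>
     (\<forall>s\<in>S. s \<noteq> {}) \<and>
     (\<forall>s\<in>S. \<forall>s'\<in>S. s \<noteq> s' \<longrightarrow> s \<inter> s' = {}) \<and>
     \<Union>S = X \<times> X \<and>
     Id_on X \<in> S \<and>
     (\<forall>s\<in>S. s\<inverse> \<in> S) \<and>
     (\<forall>s\<in>S. \<forall>t\<in>S. \<forall>u\<in>S. \<exists>c::nat. \<forall>(\<alpha>,\<beta>)\<in>u.
        card ({\<gamma>. (\<alpha>,\<gamma>) \<in> s} \<inter> {\<gamma>. (\<beta>,\<gamma>) \<in> t\<inverse>}) = c)"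

definition rel_image :: "('a \<Rightarrow> 'b) \<Rightarrow> ('a \<times> 'a) set \<Rightarrow> ('b \<times> 'b) set" where
  "rel_image \<phi> s = {(\<phi> x, \<phi> y) | x y. (x,y) \<in> s}"

definition scheme_iso :: "'a set \<Rightarrow> ('a \<times> 'a) set set \<Rightarrow> 'b set \<Rightarrow> ('b \<times> 'b) set set
    \<Rightarrow> ('a \<Rightarrow> 'b) \<Rightarrow> bool" where
  "scheme_iso X S X1 S1 \<phi> \<longleftrightarrow> bij_betw \<phi> X X1 \<and> bij_betw (rel_image \<phi>) S S1"

definition schemes_isomorphic :: "'a set \<Rightarrow> ('a \<times> 'a) set set \<Rightarrow> 'b set \<Rightarrow> ('b \<times> 'b) set set
    \<Rightarrow> bool" where
  "schemes_isomorphic X S X1 S1 \<longleftrightarrow> (\<exists>\<phi>. scheme_iso X S X1 S1 \<phi>)"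

(* Here the point set X is the whole finite type 'a *)
definition Iso_grp :: "('a \<times> 'a) set set \<Rightarrow> ('a \<Rightarrow> 'a) set" where
  "Iso_grp S = {\<sigma>. bij \<sigma> \<and> (\<forall>s\<in>S. rel_image \<sigma> s \<in> S)}"

definition Aut_grp :: "('a \<times> 'a) set set \<Rightarrow> ('a \<Rightarrow> 'a) set" where
  "Aut_grp S = {\<sigma>. bij \<sigma> \<and> (\<forall>s\<in>S. rel_image \<sigma> s = s)}"

(* permutation matrix: P_\<sigma> e_y = e_{\<sigma> y} *)
definition perm_mat :: "('a::finite \<Rightarrow> 'a) \<Rightarrow> real^'a^'a" where
  "perm_mat \<sigma> = (\<chi> x y. if x = \<sigma> y then 1 else 0)"

definition perm_mats :: "('a::finite \<Rightarrow> 'a) set \<Rightarrow> (real^'a^'a) set" where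
  "perm_mats G = perm_mat ` G"

definition sign_diags :: "(real^'a::finite^'a) set" where
  "sign_diags = {A. \<exists>d::'a \<Rightarrow> real. (\<forall>x. d x = 1 \<or> d x = -1) \<and>
                      A = (\<chi> x y. if x = y then d x else 0)}"

(* D \<rtimes> P(G) as the set of products inside the matrix group *)
definition semidirect_D :: "('a::finite \<Rightarrow> 'a) set \<Rightarrow> (real^'a^'a) set" where
  "semidirect_D G = {D ** P | D P. D \<in> sign_diags \<and> P \<in> perm_mats G}"

definition hadamard :: "real^'a::finite^'a \<Rightarrow> bool" where
  "hadamard H \<longleftrightarrow> (\<forall>x y. H $ x $ y = 1 \<or> H $ x $ y = -1) \<and>
                  H ** transpose H = mat (real CARD('a))"

definition hadamard_similar :: "('a::finite \<times> 'a) set set \<Rightarrow> real^'a^'a \<Rightarrow> real^'a^'a \<Rightarrow> bool" where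
  "hadamard_similar S H1 H2 \<longleftrightarrow>
     (\<exists>P' Q' P Q. P' \<in> sign_diags \<and> Q' \<in> sign_diags \<and>
        P \<in> perm_mats (Iso_grp S) \<and> Q \<in> perm_mats (Iso_grp S) \<and>
        (H2 = matrix_inv (P' ** P) ** H1 ** (Q' ** Q) \<or>
         transpose H2 = matrix_inv (P' ** P) ** H1 ** (Q' ** Q)) \<and>
        matrix_inv (P' ** P) ** (Q' ** Q) \<in> semidirect_D (Aut_grp S))"

(* The construction: \<widetilde>X = X \<times> F2 \<times> F2, with F2 = bool (addition = xor); x_ab = (x,a,b) *)
definition t_tilde :: "('a \<times> bool \<times> bool) rel" where
  "t_tilde = {((x,a,b),(x,a,\<not>b)) | x a b. True}"

definition s_tilde :: "('a \<times> 'a) set \<Rightarrow> ('a \<times> bool \<times> bool) rel" where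
  "s_tilde s = {((x,a,b),(y,a,c)) | x y a b c. (x,y) \<in> s}"

definition transp_if :: "bool \<Rightarrow> real^'a::finite^'a \<Rightarrow> real^'a^'a" where
  "transp_if a H = (if a then transpose H else H)"

definition r_one :: "real^'a::finite^'a \<Rightarrow> ('a \<times> bool \<times> bool) rel" where
  "r_one H = {((x,a,b),(y,c,d)) | x y a b c d.
      (1 - (if a = c then 1 else 0)) * (transp_if a H $ x $ y) = (-1::real) ^ (of_bool b + of_bool d)}"

definition r_minus_one :: "real^'a::finite^'a \<Rightarrow> ('a \<times> bool \<times> bool) rel" where
  "r_minus_one H = {((x,a,b),(y,c,d)) | x y a b c d. a \<noteq> c} - r_one H"

definition S_of :: "('a::finite \<times> 'a) set set \<Rightarrow> real^'a^'a \<Rightarrow> ('a \<times> bool \<times> bool) rel set" where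
  "S_of S H = {Id, t_tilde} \<union> s_tilde ` (S - {Id}) \<union> {r_one H, r_minus_one H}"

end

theory Submission
  imports Defs
begin


definition sdiag :: "('a::finite \<Rightarrow> real) \<Rightarrow> real^'a^'a" where
  "sdiag d = (\<chi> x y. if x = y then d x else 0)"

lemma mat_eqI: "(\<And>i j. (A::'b^'n^'m)$i$j = B$i$j) \<Longrightarrow> A = B"
  by (simp add: vec_eq_iff)

lemma mul_left_fun:
  fixes X :: "real^'a::finite^'a"
  assumes "\<And>i k. X$i$k = (if k = f i then w i else 0)"
  shows "(X ** A)$i$j = w i * A$(f i)$j"
  by (simp add: matrix_matrix_mult_def assms if_distrib if_distribR cong: if_cong)

lemma mul_right_fun:
  fixes Y :: "real^'a::finite^'a"
  assumes "\<And>k j. Y$k$j = (if k = g j then w j else 0)"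
  shows "(A ** Y)$i$j = A$i$(g j) * w j"
  by (simp add: matrix_matrix_mult_def assms if_distrib if_distribR cong: if_cong)

lemma sdiag_perm_entry:
  "(sdiag d ** perm_mat \<alpha>)$k$j = (if k = \<alpha> j then d (\<alpha> j) else 0)"
proof -
  have "(sdiag d ** perm_mat \<alpha>)$k$j = sdiag d $ k $ (\<alpha> j) * (\<lambda>_. 1) j"
    by (rule mul_right_fun) (simp add: perm_mat_def)
  then show ?thesis by (simp add: sdiag_def)
qed

lemma sdiag_perm_entry':
  assumes "bij \<beta>"
  shows "(sdiag d ** perm_mat \<beta>)$i$k = (if k = inv \<beta> i then d i else 0)"
proof -
  have "(i = \<beta> k) = (k = inv \<beta> i)"
    using assms by (metis bij_inv_eq_iff)
  then show ?thesis unfolding sdiag_perm_entry by auto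
qed

lemma perm_sdiag_entry:
  assumes "bij \<beta>"
  shows "(perm_mat (inv \<beta>) ** sdiag d)$i$k = (if k = \<beta> i then d (\<beta> i) else 0)"
proof -
  have "(perm_mat (inv \<beta>) ** sdiag d)$i$k = perm_mat (inv \<beta>) $ i $ k * d (id k)"
    by (rule mul_right_fun) (simp add: sdiag_def)
  moreover have "(i = inv \<beta> k) = (k = \<beta> i)"
    using assms by (metis bij_inv_eq_iff)
  ultimately show ?thesis by (simp add: perm_mat_def)
qed

lemma matrix_inv_eqI:
  fixes A B :: "real^'a::finite^'a"
  assumes "A ** B = mat 1" "B ** A = mat 1"
  shows "matrix_inv A = B"
proof -
  have ex: "A ** matrix_inv A = mat 1 \<and> matrix_inv A ** A = mat 1"
    unfolding matrix_inv_def by (rule someI[where x=B]) (use assms in auto)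
  have "matrix_inv A = matrix_inv A ** (A ** B)" using assms by simp
  also have "\<dots> = (matrix_inv A ** A) ** B" by (simp add: matrix_mul_assoc)
  also have "\<dots> = B" using ex by simp
  finally show ?thesis .
qed

definition pm1 :: "('a \<Rightarrow> real) \<Rightarrow> bool" where
  "pm1 d \<longleftrightarrow> (\<forall>x. d x = 1 \<or> d x = -1)"

lemma pm1_sq: "pm1 d \<Longrightarrow> d x * d x = 1"
  unfolding pm1_def by (metis mult_1 mult_minus1 minus_minus)

lemma matrix_inv_sdiag_perm:
  fixes p :: "'a::finite \<Rightarrow> real"
  assumes "bij \<beta>" "pm1 p"
  shows "matrix_inv (sdiag p ** perm_mat \<beta>) = perm_mat (inv \<beta>) ** sdiag p"
proof (rule matrix_inv_eqI)
  have b1: "\<And>i. \<beta> (inv \<beta> i) = i" using assms(1) by (meson bij_inv_eq_iff)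
  have b2: "\<And>i. inv \<beta> (\<beta> i) = i" using assms(1) by (simp add: bij_is_inj)
  have "(sdiag p ** perm_mat \<beta> ** (perm_mat (inv \<beta>) ** sdiag p))$i$j = mat 1 $ i $ j" for i j
    apply (subst mul_left_fun[where f="inv \<beta>" and w=p])
     apply (rule sdiag_perm_entry'[OF assms(1)])
    apply (simp only: perm_sdiag_entry[OF assms(1)] b1)
    using pm1_sq[OF assms(2)] by (cases "i = j") (simp_all add: mat_def)
  note e1 = this
  show "sdiag p ** perm_mat \<beta> ** (perm_mat (inv \<beta>) ** sdiag p) = mat 1"
    by (rule mat_eqI) (rule e1)
  have "(perm_mat (inv \<beta>) ** sdiag p ** (sdiag p ** perm_mat \<beta>))$i$j = mat 1 $ i $ j" for i j
  proof -
    have "(perm_mat (inv \<beta>) ** sdiag p ** (sdiag p ** perm_mat \<beta>))$i$j = p (\<beta> i) * (sdiag p ** perm_mat \<beta>)$(\<beta> i)$j"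
      by (rule mul_left_fun[OF perm_sdiag_entry[OF assms(1)]])
    also have "\<dots> = p (\<beta> i) * (if j = i then p (\<beta> i) else 0)"
      by (simp only: sdiag_perm_entry'[OF assms(1)] b2)
    also have "\<dots> = mat 1 $ i $ j"
      using pm1_sq[OF assms(2)] by (cases "i = j") (simp_all add: mat_def)
    finally show ?thesis .
  qed
  note e = this
  show "perm_mat (inv \<beta>) ** sdiag p ** (sdiag p ** perm_mat \<beta>) = mat 1"
    by (rule mat_eqI) (rule e)
qed



definition sg :: "bool \<Rightarrow> real" where "sg b = (if b then -1 else 1)"
definition ent :: "real^'a::finite^'a \<Rightarrow> bool" where "ent H \<longleftrightarrow> (\<forall>x y. H$x$y = 1 \<or> H$x$y = -1)"

lemma sg_xor: "sg (a \<noteq> b) = sg a * sg b" by (simp add: sg_def)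
lemma sg_sq: "sg a * sg a = 1" by (simp add: sg_def)
lemma sg_nz: "sg a \<noteq> 0" by (simp add: sg_def)
lemma pow_sg: "(-1::real)^(of_bool b + of_bool d) = sg b * sg d"
  by (cases b; cases d) (simp_all add: sg_def)

lemma ent_sg: "ent H \<Longrightarrow> H$x$y = sg (H$x$y = -1)"
  unfolding ent_def sg_def by (metis one_neq_neg_one)

lemma transp_if_entry: "transp_if a H $ x $ y = (if a then H $ y $ x else H $ x $ y)"
  by (simp add: transp_if_def transpose_def)

lemma transp_if_not: "transp_if (\<not> a) H $ x $ y = transp_if a H $ y $ x"
  by (simp add: transp_if_entry)

lemma ent_transp_if: "ent H \<Longrightarrow> ent (transp_if a H)"
  unfolding ent_def transp_if_entry by auto

lemma mem_t: "(((x,a,b),(y,c,d)) \<in> t_tilde) \<longleftrightarrow> y = x \<and> c = a \<and> d = (\<not> b)"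
  by (auto simp: t_tilde_def)
lemma mem_s: "(((x,a,b),(y,c,d)) \<in> s_tilde s) \<longleftrightarrow> c = a \<and> (x,y) \<in> s"
  by (auto simp: s_tilde_def)
lemma mem_r1: "(((x,a,b),(y,c,d)) \<in> r_one H) \<longleftrightarrow> a \<noteq> c \<and> transp_if a H $ x $ y = sg b * sg d"
proof -
  have "(((x,a,b),(y,c,d)) \<in> r_one H) \<longleftrightarrow>
     (1 - (if a = c then 1 else 0)) * (transp_if a H $ x $ y) = sg b * sg d"
    unfolding r_one_def pow_sg[symmetric] by blast
  then show ?thesis by (cases "a = c") (auto simp: sg_def)
qed
lemma mem_rm1: "(((x,a,b),(y,c,d)) \<in> r_minus_one H) \<longleftrightarrow> a \<noteq> c \<and> transp_if a H $ x $ y \<noteq> sg b * sg d"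
proof -
  have "(((x,a,b),(y,c,d)) \<in> r_minus_one H) \<longleftrightarrow> a \<noteq> c \<and> ((x,a,b),(y,c,d)) \<notin> r_one H"
    unfolding r_minus_one_def by blast
  then show ?thesis by (auto simp: mem_r1)
qed

definition tt :: "'a \<times> bool \<times> bool \<Rightarrow> 'a \<times> bool \<times> bool" where
  "tt p = (fst p, fst (snd p), \<not> snd (snd p))"

lemma mem_t': "(p,q) \<in> t_tilde \<longleftrightarrow> q = tt p"
  by (cases p; cases q) (auto simp: mem_t tt_def)

lemma rel_image_mem: "(u,v) \<in> rel_image f s \<longleftrightarrow> (\<exists>x y. u = f x \<and> v = f y \<and> (x,y) \<in> s)"
  by (auto simp: rel_image_def)

lemma mem_rel_image_bij: "bij f \<Longrightarrow> (f x, f y) \<in> rel_image f s \<longleftrightarrow> (x,y) \<in> s"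
  by (auto simp: rel_image_mem bij_is_inj inj_eq)

lemma mem_rel_image_inv: "bij f \<Longrightarrow> (u, v) \<in> rel_image f s \<longleftrightarrow> (inv f u, inv f v) \<in> s"
  by (metis bij_inv_eq_iff mem_rel_image_bij)

lemma rel_image_eqI:
  assumes "bij f" "\<And>x y. (f x, f y) \<in> R' \<longleftrightarrow> (x,y) \<in> R"
  shows "rel_image f R = R'"
proof (rule set_eqI)
  fix z show "z \<in> rel_image f R \<longleftrightarrow> z \<in> R'"
  proof (cases z)
    case (Pair u v)
    have "u = f (inv f u)" "v = f (inv f v)" using assms(1) by (metis bij_inv_eq_iff)+
    then show ?thesis using assms Pair mem_rel_image_inv[OF assms(1)] by metis
  qed
qed

lemma rel_image_Id: "bij f \<Longrightarrow> rel_image f Id = Id"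
  by (rule rel_image_eqI) (auto simp: bij_is_inj inj_eq)

lemma rel_image_comp: "rel_image (f \<circ> g) s = rel_image f (rel_image g s)"
  by (auto simp: rel_image_def)

lemma rel_image_inv_cancel: "bij f \<Longrightarrow> rel_image (inv f) (rel_image f s) = s"
  by (rule rel_image_eqI) (auto simp: bij_imp_bij_inv mem_rel_image_inv inv_inv_eq)

lemma rel_image_cancel_inv: "bij f \<Longrightarrow> rel_image f (rel_image (inv f) s) = s"
  using rel_image_inv_cancel[of "inv f" s] by (simp add: bij_imp_bij_inv inv_inv_eq)

lemma inj_rel_image: "bij f \<Longrightarrow> inj (rel_image f)"
  by (metis injI rel_image_inv_cancel)

lemma rel_image_Un: "rel_image f (A \<union> B) = rel_image f A \<union> rel_image f B"
  by (auto simp: rel_image_def)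

lemma idon: "Id_on UNIV = Id" by auto

lemma scheme_Id: "assoc_scheme UNIV S \<Longrightarrow> Id \<in> S"
  by (simp add: assoc_scheme_def idon)
lemma scheme_ne: "assoc_scheme UNIV S \<Longrightarrow> s \<in> S \<Longrightarrow> s \<noteq> {}"
  by (simp add: assoc_scheme_def)
lemma scheme_offdiag: "assoc_scheme UNIV S \<Longrightarrow> s \<in> S \<Longrightarrow> s \<noteq> Id \<Longrightarrow> (x,y) \<in> s \<Longrightarrow> x \<noteq> y"
  unfolding assoc_scheme_def by (metis idon IdI disjoint_iff)

lemma finite_S: "finite (S :: ('a::finite \<times> 'a) set set)"
  by (rule finite_subset[of _ "Pow UNIV"]) auto

lemma iso_image:
  assumes "\<sigma> \<in> Iso_grp (S :: ('a::finite \<times> 'a) set set)"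
  shows "rel_image \<sigma> ` S = S"
proof (rule endo_inj_surj[OF finite_S])
  show "rel_image \<sigma> ` S \<subseteq> S" using assms by (auto simp: Iso_grp_def)
  show "inj_on (rel_image \<sigma>) S" using assms inj_on_subset[OF inj_rel_image] by (auto simp: Iso_grp_def)
qed

lemma iso_inv:
  assumes "\<sigma> \<in> Iso_grp (S :: ('a::finite \<times> 'a) set set)"
  shows "inv \<sigma> \<in> Iso_grp S"
proof -
  have b: "bij \<sigma>" using assms by (simp add: Iso_grp_def)
  have "rel_image (inv \<sigma>) s \<in> S" if "s \<in> S" for s
  proof -
    obtain s0 where "s0 \<in> S" "s = rel_image \<sigma> s0" using iso_image[OF assms] \<open>s \<in> S\<close> by blast
    then show ?thesis using rel_image_inv_cancel[OF b] by simp
  qed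
  then show ?thesis using b by (simp add: Iso_grp_def bij_imp_bij_inv)
qed



lemma sim_entry:
  assumes "bij \<beta>" "pm1 p"
  shows "(matrix_inv (sdiag p ** perm_mat \<beta>) ** H ** (sdiag q ** perm_mat \<alpha>)) $ i $ j
         = p (\<beta> i) * H $ (\<beta> i) $ (\<alpha> j) * q (\<alpha> j)"
proof -
  have "(matrix_inv (sdiag p ** perm_mat \<beta>) ** H ** (sdiag q ** perm_mat \<alpha>)) $ i $ j
      = (matrix_inv (sdiag p ** perm_mat \<beta>) ** H) $ i $ (\<alpha> j) * q (\<alpha> j)"
    by (rule mul_right_fun) (rule sdiag_perm_entry)
  also have "(matrix_inv (sdiag p ** perm_mat \<beta>) ** H) $ i $ (\<alpha> j) = p (\<beta> i) * H $ (\<beta> i) $ (\<alpha> j)"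
    unfolding matrix_inv_sdiag_perm[OF assms]
    by (rule mul_left_fun) (rule perm_sdiag_entry[OF assms(1)])
  finally show ?thesis by simp
qed

lemma sim_entry2:
  assumes "bij \<beta>" "pm1 p"
  shows "(matrix_inv (sdiag p ** perm_mat \<beta>) ** (sdiag q ** perm_mat \<alpha>)) $ i $ j
         = p (\<beta> i) * (if \<beta> i = \<alpha> j then q (\<alpha> j) else 0)"
  unfolding matrix_inv_sdiag_perm[OF assms]
  by (subst mul_left_fun[OF perm_sdiag_entry[OF assms(1)]]) (simp add: sdiag_perm_entry)

definition Phi :: "bool \<Rightarrow> (bool \<Rightarrow> 'a \<Rightarrow> 'a) \<Rightarrow> (bool \<Rightarrow> 'a \<Rightarrow> bool) \<Rightarrow> 'a \<times> bool \<times> bool \<Rightarrow> 'a \<times> bool \<times> bool" where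
  "Phi e \<sigma> \<epsilon> = (\<lambda>(x,a,b). (\<sigma> a x, a \<noteq> e, b \<noteq> \<epsilon> a x))"

lemma Phi_app: "Phi e \<sigma> \<epsilon> (x,a,b) = (\<sigma> a x, a \<noteq> e, b \<noteq> \<epsilon> a x)"
  by (simp add: Phi_def)

lemma bij_Phi:
  fixes \<sigma> :: "bool \<Rightarrow> 'a::finite \<Rightarrow> 'a"
  assumes "\<And>a. bij (\<sigma> a)"
  shows "bij (Phi e \<sigma> \<epsilon>)"
proof -
  have "inj (Phi e \<sigma> \<epsilon>)"
  proof (rule injI)
    fix p q assume h: "Phi e \<sigma> \<epsilon> p = Phi e \<sigma> \<epsilon> q"
    obtain x a b where p: "p = (x,a,b)" by (cases p) auto
    obtain y c d where q: "q = (y,c,d)" by (cases q) auto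
    from h have ac: "a = c" by (auto simp: p q Phi_app)
    with h have "\<sigma> a x = \<sigma> a y" by (auto simp: p q Phi_app)
    then have "x = y" using assms[of a] by (simp add: bij_is_inj inj_eq)
    with h ac show "p = q" by (auto simp: p q Phi_app)
  qed
  then show ?thesis by (simp add: bij_def finite_UNIV_inj_surj)
qed

lemma core_iso:
  fixes S :: "('a::finite \<times> 'a) set set" and H1 H2 :: "real^'a^'a"
    and \<sigma> :: "bool \<Rightarrow> 'a \<Rightarrow> 'a"
  assumes S: "assoc_scheme UNIV S"
    and bs: "\<And>a. bij (\<sigma> a)" and isoF: "\<sigma> False \<in> Iso_grp S"
    and same: "\<And>s. s \<in> S \<Longrightarrow> rel_image (\<sigma> True) s = rel_image (\<sigma> False) s"
    and rel: "\<And>x y. transp_if e H2 $ (\<sigma> False x) $ (\<sigma> True y) = sg (\<epsilon> False x) * sg (\<epsilon> True y) * H1 $ x $ y"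
  shows "scheme_iso UNIV (S_of S H1) UNIV (S_of S H2) (Phi e \<sigma> \<epsilon>)"
proof -
  let ?F = "Phi e \<sigma> \<epsilon>"
  have bF: "bij ?F" by (rule bij_Phi[OF bs])
  have inj\<sigma>: "\<And>a x y. \<sigma> a x = \<sigma> a y \<longleftrightarrow> x = y" using bs by (simp add: bij_is_inj inj_eq)
  have same': "\<And>s a. s \<in> S \<Longrightarrow> rel_image (\<sigma> a) s = rel_image (\<sigma> False) s"
    using same by (case_tac a) auto
  have key: "transp_if (a \<noteq> e) H2 $ (\<sigma> a x) $ (\<sigma> c y) = sg (b \<noteq> \<epsilon> a x) * sg (d \<noteq> \<epsilon> c y)
      \<longleftrightarrow> transp_if a H1 $ x $ y = sg b * sg d" if ac: "a \<noteq> c" for a c x y b d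
  proof (cases a)
    case True
    then have c: "c = False" using ac by simp
    have "transp_if (a \<noteq> e) H2 $ (\<sigma> a x) $ (\<sigma> c y) = sg (\<epsilon> False y) * sg (\<epsilon> True x) * H1 $ y $ x"
      using True c rel[of y x] transp_if_not[of e H2] by simp
    moreover have "transp_if a H1 $ x $ y = H1 $ y $ x" using True by (simp add: transp_if_entry)
    moreover have "sg (\<epsilon> False y) * sg (\<epsilon> True x) \<noteq> 0" by (simp add: sg_nz)
    ultimately show ?thesis using True c
      by (cases "\<epsilon> True x"; cases "\<epsilon> False y"; cases b; cases d) (auto simp: sg_def)
  next
    case False
    then have c: "c = True" using ac by simp
    have "transp_if (a \<noteq> e) H2 $ (\<sigma> a x) $ (\<sigma> c y) = sg (\<epsilon> False x) * sg (\<epsilon> True y) * H1 $ x $ y"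
      using False c rel[of x y] by simp
    moreover have "transp_if a H1 $ x $ y = H1 $ x $ y" using False by (simp add: transp_if_entry)
    moreover have "sg (\<epsilon> False x) * sg (\<epsilon> True y) \<noteq> 0" by (simp add: sg_nz)
    ultimately show ?thesis using False c
      by (cases "\<epsilon> False x"; cases "\<epsilon> True y"; cases b; cases d) (auto simp: sg_def)
  qed
  have imId: "rel_image ?F Id = Id" by (rule rel_image_Id[OF bF])
  have imT: "rel_image ?F t_tilde = t_tilde"
  proof (rule rel_image_eqI[OF bF])
    fix p q :: "'a \<times> bool \<times> bool"
    obtain x a b where p: "p = (x,a,b)" by (cases p) auto
    obtain y c d where q: "q = (y,c,d)" by (cases q) auto
    show "(?F p, ?F q) \<in> t_tilde \<longleftrightarrow> (p,q) \<in> t_tilde"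
    proof (cases "a = c")
      case True
      then show ?thesis using inj\<sigma>[of a x y] by (auto simp: p q Phi_app mem_t)
    next
      case False
      then show ?thesis by (auto simp: p q Phi_app mem_t)
    qed
  qed
  have imS: "rel_image ?F (s_tilde s) = s_tilde (rel_image (\<sigma> False) s)" if "s \<in> S" for s
  proof (rule rel_image_eqI[OF bF])
    fix p q :: "'a \<times> bool \<times> bool"
    obtain x a b where p: "p = (x,a,b)" by (cases p) auto
    obtain y c d where q: "q = (y,c,d)" by (cases q) auto
    show "(?F p, ?F q) \<in> s_tilde (rel_image (\<sigma> False) s) \<longleftrightarrow> (p,q) \<in> s_tilde s"
    proof (cases "a = c")
      case True
      then show ?thesis using same'[OF that, of a] mem_rel_image_bij[OF bs[of a]]
        by (auto simp: p q Phi_app mem_s)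
    next
      case False
      then show ?thesis by (auto simp: p q Phi_app mem_s)
    qed
  qed
  have imR1: "rel_image ?F (r_one H1) = r_one H2"
  proof (rule rel_image_eqI[OF bF])
    fix p q :: "'a \<times> bool \<times> bool"
    obtain x a b where p: "p = (x,a,b)" by (cases p) auto
    obtain y c d where q: "q = (y,c,d)" by (cases q) auto
    show "(?F p, ?F q) \<in> r_one H2 \<longleftrightarrow> (p,q) \<in> r_one H1"
      using key[of a c x y b d] by (cases "a = c") (auto simp: p q Phi_app mem_r1)
  qed
  have imRm1: "rel_image ?F (r_minus_one H1) = r_minus_one H2"
  proof (rule rel_image_eqI[OF bF])
    fix p q :: "'a \<times> bool \<times> bool"
    obtain x a b where p: "p = (x,a,b)" by (cases p) auto
    obtain y c d where q: "q = (y,c,d)" by (cases q) auto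
    show "(?F p, ?F q) \<in> r_minus_one H2 \<longleftrightarrow> (p,q) \<in> r_minus_one H1"
      using key[of a c x y b d] by (cases "a = c") (auto simp: p q Phi_app mem_rm1)
  qed
  have bS: "bij (\<sigma> False)" by (rule bs)
  have imgS: "rel_image (\<sigma> False) ` (S - {Id}) = S - {Id}"
  proof -
    have "rel_image (\<sigma> False) ` (S - {Id}) = rel_image (\<sigma> False) ` S - rel_image (\<sigma> False) ` {Id}"
      by (rule image_set_diff[OF inj_rel_image[OF bS]])
    then show ?thesis using iso_image[OF isoF] rel_image_Id[OF bS] by simp
  qed
  have img: "rel_image ?F ` S_of S H1 = S_of S H2"
  proof -
    have "rel_image ?F ` S_of S H1 = {Id, t_tilde} \<union> (\<lambda>s. rel_image ?F (s_tilde s)) ` (S - {Id}) \<union> {r_one H2, r_minus_one H2}"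
      unfolding S_of_def using imId imT imR1 imRm1 by (simp add: image_Un image_image)
    also have "(\<lambda>s. rel_image ?F (s_tilde s)) ` (S - {Id}) = s_tilde ` (rel_image (\<sigma> False) ` (S - {Id}))"
      using imS by (auto simp: image_image)
    finally show ?thesis unfolding S_of_def imgS .
  qed
  show ?thesis unfolding scheme_iso_def
    using bF img inj_on_subset[OF inj_rel_image[OF bF] subset_UNIV]
    by (simp add: bij_betw_def)
qed



lemma pm1_sg: "pm1 p \<Longrightarrow> sg (p x = -1) = p x"
  unfolding pm1_def sg_def by (metis one_neq_neg_one)

lemma sign_diagsE:
  assumes "P' \<in> sign_diags"
  obtains p where "pm1 p" "P' = sdiag p"
  using assms unfolding sign_diags_def sdiag_def pm1_def by blast

lemma sign_diagsI: "pm1 p \<Longrightarrow> sdiag p \<in> sign_diags"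
  unfolding sign_diags_def sdiag_def pm1_def by blast

lemma bwd:
  fixes S :: "('a::finite \<times> 'a) set set" and H1 H2 :: "real^'a^'a"
  assumes S: "assoc_scheme UNIV S" and sim: "hadamard_similar S H1 H2"
  shows "schemes_isomorphic (UNIV :: ('a \<times> bool \<times> bool) set) (S_of S H1) UNIV (S_of S H2)"
proof -
  obtain P' Q' P Q where P': "P' \<in> sign_diags" and Q': "Q' \<in> sign_diags"
    and P: "P \<in> perm_mats (Iso_grp S)" and Q: "Q \<in> perm_mats (Iso_grp S)"
    and eq: "H2 = matrix_inv (P' ** P) ** H1 ** (Q' ** Q) \<or>
         transpose H2 = matrix_inv (P' ** P) ** H1 ** (Q' ** Q)"
    and sd: "matrix_inv (P' ** P) ** (Q' ** Q) \<in> semidirect_D (Aut_grp S)"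
    using sim unfolding hadamard_similar_def by blast
  obtain p where p: "pm1 p" "P' = sdiag p" using P' by (rule sign_diagsE)
  obtain q where q: "pm1 q" "Q' = sdiag q" using Q' by (rule sign_diagsE)
  obtain \<beta> where \<beta>: "\<beta> \<in> Iso_grp S" "P = perm_mat \<beta>" using P by (auto simp: perm_mats_def)
  obtain \<alpha> where \<alpha>: "\<alpha> \<in> Iso_grp S" "Q = perm_mat \<alpha>" using Q by (auto simp: perm_mats_def)
  have b\<beta>: "bij \<beta>" and b\<alpha>: "bij \<alpha>" using \<beta> \<alpha> by (auto simp: Iso_grp_def)
  obtain D R where DR: "matrix_inv (P' ** P) ** (Q' ** Q) = D ** R" "D \<in> sign_diags" "R \<in> perm_mats (Aut_grp S)"
    using sd unfolding semidirect_D_def by blast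
  obtain d where d: "pm1 d" "D = sdiag d" using DR(2) by (rule sign_diagsE)
  obtain \<rho> where \<rho>: "\<rho> \<in> Aut_grp S" "R = perm_mat \<rho>" using DR(3) by (auto simp: perm_mats_def)
  obtain e where e: "transp_if e H2 = matrix_inv (P' ** P) ** H1 ** (Q' ** Q)"
    using eq by (metis transp_if_def)
  have ib: "\<And>x. \<beta> (inv \<beta> x) = x" using b\<beta> by (meson bij_inv_eq_iff)
  have ia: "\<And>x. \<alpha> (inv \<alpha> x) = x" using b\<alpha> by (meson bij_inv_eq_iff)
  have \<rho>eq: "\<rho> j = inv \<beta> (\<alpha> j)" for j
  proof -
    let ?i = "inv \<beta> (\<alpha> j)"
    have "(matrix_inv (P' ** P) ** (Q' ** Q)) $ ?i $ j = p (\<alpha> j) * q (\<alpha> j)"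
      unfolding p q \<beta> \<alpha> sim_entry2[OF b\<beta> p(1)] ib by simp
    moreover have "(matrix_inv (P' ** P) ** (Q' ** Q)) $ ?i $ j = (if ?i = \<rho> j then d (\<rho> j) else 0)"
      unfolding DR(1) d \<rho> by (rule sdiag_perm_entry)
    moreover have "p (\<alpha> j) \<noteq> 0" using pm1_sq[OF p(1), of "\<alpha> j"] by auto
    moreover have "q (\<alpha> j) \<noteq> 0" using pm1_sq[OF q(1), of "\<alpha> j"] by auto
    ultimately show ?thesis by (cases "inv \<beta> (\<alpha> j) = \<rho> j") auto
  qed
  define \<sigma> where "\<sigma> = (\<lambda>a::bool. if a then inv \<alpha> else inv \<beta>)"
  define \<epsilon> where "\<epsilon> = (\<lambda>(a::bool) x. if a then q x = -1 else p x = -1)"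
  have "scheme_iso UNIV (S_of S H1) UNIV (S_of S H2) (Phi e \<sigma> \<epsilon>)"
  proof (rule core_iso[OF S])
    show "bij (\<sigma> a)" for a using b\<alpha> b\<beta> by (simp add: \<sigma>_def bij_imp_bij_inv)
    show "\<sigma> False \<in> Iso_grp S" using iso_inv[OF \<beta>(1)] by (simp add: \<sigma>_def)
    show "rel_image (\<sigma> True) s = rel_image (\<sigma> False) s" if s: "s \<in> S" for s
    proof -
      let ?s0 = "rel_image (inv \<alpha>) s"
      have s0: "?s0 \<in> S" using iso_inv[OF \<alpha>(1)] s by (simp add: Iso_grp_def)
      have "rel_image \<rho> ?s0 = ?s0" using \<rho>(1) s0 by (simp add: Aut_grp_def)
      moreover have "\<rho> = inv \<beta> \<circ> \<alpha>" using \<rho>eq by auto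
      ultimately have "rel_image (inv \<beta>) (rel_image \<alpha> ?s0) = ?s0" by (simp add: rel_image_comp)
      then show ?thesis using rel_image_cancel_inv[OF b\<alpha>] by (simp add: \<sigma>_def)
    qed
    show "transp_if e H2 $ (\<sigma> False x) $ (\<sigma> True y) = sg (\<epsilon> False x) * sg (\<epsilon> True y) * H1 $ x $ y" for x y
      unfolding e p q \<beta> \<alpha> sim_entry[OF b\<beta> p(1)] using pm1_sg[OF p(1)] pm1_sg[OF q(1)]
      by (simp add: \<sigma>_def \<epsilon>_def ib ia)
  qed
  then show ?thesis unfolding schemes_isomorphic_def by blast
qed



definition lay :: "'a \<times> bool \<times> bool \<Rightarrow> bool" where "lay p = fst (snd p)"

lemma wit_r1: "ent H \<Longrightarrow> ((x,False,False),(y,True,(H$x$y = -1))) \<in> r_one H"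
  unfolding mem_r1 transp_if_entry using ent_sg[of H x y] by (simp add: sg_def)

lemma wit_rm1: "ent H \<Longrightarrow> ((x,False,False),(y,True,(H$x$y = 1))) \<in> r_minus_one H"
  unfolding mem_rm1 transp_if_entry ent_def sg_def by (cases "H$x$y = 1") auto

lemma Q_r1: "(p,q) \<in> r_one H \<Longrightarrow> (p, tt q) \<notin> r_one H"
  by (cases p; cases q) (auto simp: tt_def mem_r1 sg_def)

lemma Q_rm1: "ent H \<Longrightarrow> (p,q) \<in> r_minus_one H \<Longrightarrow> (p, tt q) \<notin> r_minus_one H"
proof (cases p; cases q)
  fix x a b y c d assume e: "ent H" and pq: "(p,q) \<in> r_minus_one H" and p: "p = (x,a,b)" and q: "q = (y,c,d)"
  have e': "ent (transp_if a H)" using e by (rule ent_transp_if)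
  then show ?thesis using pq unfolding p q tt_def mem_rm1 ent_def
    by (cases b; cases d) (auto simp: sg_def)
qed

lemma DL_eq: "r_one H \<union> r_minus_one H = {(p,q). lay p \<noteq> lay q}"
proof (rule set_eqI)
  fix z :: "('a \<times> bool \<times> bool) \<times> 'a \<times> bool \<times> bool"
  obtain x a b y c d where "z = ((x,a,b),(y,c,d))" by (metis prod.exhaust)
  then show "z \<in> r_one H \<union> r_minus_one H \<longleftrightarrow> z \<in> {(p,q). lay p \<noteq> lay q}"
    by (auto simp: mem_r1 mem_rm1 lay_def)
qed

lemma r1_ne_rm1: "ent H \<Longrightarrow> r_one H \<noteq> r_minus_one H"
proof
  assume "ent H" "r_one H = r_minus_one H"
  then have "((x,False,False),(x,True,(H$x$x = -1))) \<in> r_one H \<inter> r_minus_one H"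
    using wit_r1[of H x x] by simp
  then show False by (simp add: mem_r1 mem_rm1)
qed



lemma fwd:
  fixes S :: "('a::finite \<times> 'a) set set" and H1 H2 :: "real^'a^'a"
    and \<phi> :: "'a \<times> bool \<times> bool \<Rightarrow> 'a \<times> bool \<times> bool"
  assumes S: "assoc_scheme UNIV S" and card: "CARD('a) > 1" and e1: "ent H1" and e2: "ent H2"
    and iso: "scheme_iso UNIV (S_of S H1) UNIV (S_of S H2) \<phi>"
  shows "hadamard_similar S H1 H2"
proof -
  let ?R = "rel_image \<phi>"
  have bij: "bij \<phi>" using iso by (simp add: scheme_iso_def)
  have bb: "bij_betw ?R (S_of S H1) (S_of S H2)" using iso by (simp add: scheme_iso_def)
  have injR: "\<And>A B. ?R A = ?R B \<Longrightarrow> A = B" using inj_rel_image[OF bij] by (simp add: inj_eq)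
  have inS2: "\<And>A. A \<in> S_of S H1 \<Longrightarrow> ?R A \<in> S_of S H2" using bb by (auto simp: bij_betw_def)
  have S2cases: "\<And>A. A \<in> S_of S H2 \<Longrightarrow> A = Id \<or> A = t_tilde \<or> (\<exists>s\<in>S. s \<noteq> Id \<and> A = s_tilde s)
      \<or> A = r_one H2 \<or> A = r_minus_one H2"
    by (auto simp: S_of_def)
  have memR: "\<And>u v A. (u,v) \<in> ?R A \<longleftrightarrow> (inv \<phi> u, inv \<phi> v) \<in> A" by (rule mem_rel_image_inv[OF bij])
  have memR': "\<And>u v A. (\<phi> u, \<phi> v) \<in> ?R A \<longleftrightarrow> (u,v) \<in> A" by (rule mem_rel_image_bij[OF bij])
  have iphi1: "\<And>u. \<phi> (inv \<phi> u) = u" using bij by (meson bij_inv_eq_iff)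
  have iphi2: "\<And>u. inv \<phi> (\<phi> u) = u" using bij by (simp add: bij_is_inj)
  obtain y1 y2 :: 'a where y12: "y1 \<noteq> y2"
  proof -
    obtain y1 :: 'a where True by simp
    have "\<exists>y2. y2 \<noteq> y1"
    proof (rule ccontr)
      assume "\<not> ?thesis" then have "UNIV = {y1}" by auto
      then have "card (UNIV :: 'a set) = card {y1}" by (rule arg_cong)
      then show False using card by simp
    qed
    then show ?thesis using that by blast
  qed
  have inS1: "Id \<in> S_of S H1" "t_tilde \<in> S_of S H1" "r_one H1 \<in> S_of S H1" "r_minus_one H1 \<in> S_of S H1"
    by (auto simp: S_of_def)
  have sS1: "\<And>s. s \<in> S \<Longrightarrow> s \<noteq> Id \<Longrightarrow> s_tilde s \<in> S_of S H1" by (auto simp: S_of_def)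
  have imId: "?R Id = Id" by (rule rel_image_Id[OF bij])
  have imT: "?R t_tilde = t_tilde"
  proof -
    have fT: "q1 = q2" if "(p,q1) \<in> ?R t_tilde" "(p,q2) \<in> ?R t_tilde" for p q1 q2
    proof -
      have "inv \<phi> q1 = tt (inv \<phi> p)" "inv \<phi> q2 = tt (inv \<phi> p)" using that by (auto simp: memR mem_t')
      then have "\<phi> (inv \<phi> q1) = \<phi> (inv \<phi> q2)" by simp
      then show ?thesis by (simp add: iphi1)
    qed
    have "?R t_tilde \<in> S_of S H2" by (rule inS2[OF inS1(2)])
    then consider "?R t_tilde = Id" | "?R t_tilde = t_tilde" | s where "s \<in> S" "s \<noteq> Id" "?R t_tilde = s_tilde s"
      | "?R t_tilde = r_one H2" | "?R t_tilde = r_minus_one H2"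
      using S2cases by blast
    then show ?thesis
    proof cases
      case 1
      have "t_tilde = (Id :: ('a \<times> bool \<times> bool) rel)" by (rule injR) (simp add: 1 imId)
      moreover have "((y1,False,False),(y1,False,True)) \<in> t_tilde" by (simp add: mem_t)
      ultimately show ?thesis by auto
    next
      case 2 then show ?thesis .
    next
      case 3
      obtain u v where "(u,v) \<in> s" using scheme_ne[OF S 3(1)] by auto
      then have "((u,False,False),(v,False,False)) \<in> ?R t_tilde" "((u,False,False),(v,False,True)) \<in> ?R t_tilde"
        using 3(3) by (auto simp: mem_s)
      then have "(v,False,False) = (v,False,True)" by (intro fT)
      then show ?thesis by simp
    next
      case 4
      have hy: "((y1,False,False),(y,True,(H2$y1$y = -1))) \<in> ?R t_tilde" for y using 4 wit_r1[OF e2] by simp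
      have "(y1, True, (H2$y1$y1 = -1)) = (y2,True,(H2$y1$y2 = -1))" by (rule fT[OF hy[of y1] hy[of y2]])
      then show ?thesis using y12 by simp
    next
      case 5
      have hy: "((y1,False,False),(y,True,(H2$y1$y = 1))) \<in> ?R t_tilde" for y using 5 wit_rm1[OF e2] by simp
      have "(y1, True, (H2$y1$y1 = 1)) = (y2,True,(H2$y1$y2 = 1))" by (rule fT[OF hy[of y1] hy[of y2]])
      then show ?thesis using y12 by simp
    qed
  qed
  have comm: "\<phi> (tt p) = tt (\<phi> p)" for p
  proof -
    have "(p, tt p) \<in> t_tilde" by (simp add: mem_t')
    then have "(\<phi> p, \<phi> (tt p)) \<in> t_tilde" using memR'[of p "tt p" t_tilde] imT by simp
    then show ?thesis by (simp add: mem_t')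
  qed
  have icomm: "inv \<phi> (tt u) = tt (inv \<phi> u)" for u
    using comm[of "inv \<phi> u"] iphi1 iphi2 by metis
  have step3: "?R A = r_one H2 \<or> ?R A = r_minus_one H2"
    if A: "A \<in> S_of S H1" and QA: "\<And>p q. (p,q) \<in> A \<Longrightarrow> (p, tt q) \<notin> A"
      and w: "(p0,q0) \<in> A" "lay p0 \<noteq> lay q0" for A p0 q0
  proof -
    have "?R A \<in> S_of S H2" by (rule inS2[OF A])
    then consider "?R A = Id" | "?R A = t_tilde" | s where "s \<in> S" "s \<noteq> Id" "?R A = s_tilde s"
      | "?R A = r_one H2" | "?R A = r_minus_one H2"
      using S2cases by blast
    then show ?thesis
    proof cases
      case 1
      have "A = Id" by (rule injR) (simp add: 1 imId)
      then show ?thesis using w by auto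
    next
      case 2
      have "A = t_tilde" by (rule injR) (simp add: 2 imT)
      then show ?thesis using w by (auto simp: mem_t' tt_def lay_def)
    next
      case 3
      obtain u v where "(u,v) \<in> s" using scheme_ne[OF S 3(1)] by auto
      then have "((u,False,False),(v,False,False)) \<in> ?R A" "((u,False,False),tt (v,False,False)) \<in> ?R A"
        using 3(3) by (auto simp: mem_s tt_def)
      then have "(inv \<phi> (u,False,False), inv \<phi> (v,False,False)) \<in> A"
        "(inv \<phi> (u,False,False), tt (inv \<phi> (v,False,False))) \<in> A"
        by (auto simp: memR icomm)
      then show ?thesis using QA by blast
    qed auto
  qed
  have r1m: "?R (r_one H1) = r_one H2 \<or> ?R (r_one H1) = r_minus_one H2"
    by (rule step3[OF inS1(3) Q_r1 wit_r1[OF e1, of y1 y1]]) (simp_all add: lay_def)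
  have rm1m: "?R (r_minus_one H1) = r_one H2 \<or> ?R (r_minus_one H1) = r_minus_one H2"
    by (rule step3[OF inS1(4) Q_rm1[OF e1] wit_rm1[OF e1, of y1 y1]]) (simp_all add: lay_def)
  have neq: "?R (r_one H1) \<noteq> ?R (r_minus_one H1)" using injR[of "r_one H1" "r_minus_one H1"] r1_ne_rm1[OF e1] by blast
  have "?R (r_one H1 \<union> r_minus_one H1) = r_one H2 \<union> r_minus_one H2"
    using r1m rm1m neq r1_ne_rm1[OF e2] unfolding rel_image_Un by auto
  then have imDL: "?R {(p,q). lay p \<noteq> lay q} = {(p,q). lay p \<noteq> lay q}" unfolding DL_eq .
  have Lphi: "lay (\<phi> p) \<noteq> lay (\<phi> q) \<longleftrightarrow> lay p \<noteq> lay q" for p q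
    using memR'[of p q "{(p,q). lay p \<noteq> lay q}"] unfolding imDL by simp
  define e where "e = lay (\<phi> (y1,False,False))"
  have layer: "lay (\<phi> (x,a,b)) = (a \<noteq> e)" for x a b
    using Lphi[of "(x,a,b)" "(y1,False,False)"] unfolding e_def by (auto simp: lay_def)
  define \<sigma> where "\<sigma> = (\<lambda>a x. fst (\<phi> (x,a,False)))"
  define \<epsilon> where "\<epsilon> = (\<lambda>a x. snd (snd (\<phi> (x,a,False))))"
  have phiF: "\<phi> (x,a,False) = (\<sigma> a x, a \<noteq> e, \<epsilon> a x)" for x a
    using layer[of x a False] by (cases "\<phi> (x,a,False)") (simp add: \<sigma>_def \<epsilon>_def lay_def)
  have phiform: "\<phi> (x,a,b) = (\<sigma> a x, a \<noteq> e, b \<noteq> \<epsilon> a x)" for x a b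
  proof (cases b)
    case True
    have "(x,a,b) = tt (x,a,False)" using True by (simp add: tt_def)
    then show ?thesis using comm[of "(x,a,False)"] phiF[of x a] True by (simp add: tt_def)
  next
    case False
    then show ?thesis using phiF by simp
  qed
  have b\<sigma>: "bij (\<sigma> a)" for a
  proof -
    have "inj (\<sigma> a)"
    proof (rule injI)
      fix x y assume h: "\<sigma> a x = \<sigma> a y"
      have "\<phi> (x,a,(\<epsilon> a x \<noteq> \<epsilon> a y)) = \<phi> (y,a,False)" using h by (simp add: phiform) blast
      then have "(x,a,(\<epsilon> a x \<noteq> \<epsilon> a y)) = (y,a,False)" using bij by (simp add: bij_is_inj inj_eq)
      then show "x = y" by simp
    qed
    then show ?thesis by (simp add: bij_def finite_UNIV_inj_surj)
  qed
  have step6: "\<exists>s'\<in>S. \<forall>a. rel_image (\<sigma> a) s = s'" if s: "s \<in> S" for s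
  proof (cases "s = Id")
    case True
    then show ?thesis using rel_image_Id[OF b\<sigma>] scheme_Id[OF S] by auto
  next
    case False
    obtain u v where uv: "(u,v) \<in> s" using scheme_ne[OF S s] by auto
    have uv': "u \<noteq> v" by (rule scheme_offdiag[OF S s False uv])
    have w: "((u,False,False),(v,False,False)) \<in> s_tilde s" using uv by (simp add: mem_s)
    have "?R (s_tilde s) \<in> S_of S H2" by (rule inS2[OF sS1[OF s False]])
    then consider "?R (s_tilde s) = Id" | "?R (s_tilde s) = t_tilde" | s' where "s' \<in> S" "s' \<noteq> Id" "?R (s_tilde s) = s_tilde s'"
      | "?R (s_tilde s) = r_one H2" | "?R (s_tilde s) = r_minus_one H2"
      using S2cases by blast
    then show ?thesis
    proof cases
      case 1
      have "s_tilde s = Id" by (rule injR) (simp add: 1 imId)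
      then show ?thesis using w uv' by auto
    next
      case 2
      have "s_tilde s = t_tilde" by (rule injR) (simp add: 2 imT)
      then show ?thesis using w uv' by (auto simp: mem_t)
    next
      case 3
      have "rel_image (\<sigma> a) s = s'" for a
      proof (rule rel_image_eqI[OF b\<sigma>])
        fix x y
        have "(\<sigma> a x, \<sigma> a y) \<in> s' \<longleftrightarrow> (\<phi> (x,a,False), \<phi> (y,a,False)) \<in> s_tilde s'"
          by (simp add: phiF mem_s)
        also have "\<dots> \<longleftrightarrow> ((x,a,False),(y,a,False)) \<in> s_tilde s" using memR' 3(3) by metis
        also have "\<dots> \<longleftrightarrow> (x,y) \<in> s" by (simp add: mem_s)
        finally show "(\<sigma> a x, \<sigma> a y) \<in> s' \<longleftrightarrow> (x,y) \<in> s" .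
      qed
      then show ?thesis using 3(1) by blast
    next
      case 4
      have "(\<phi> (u,False,False), \<phi> (v,False,False)) \<in> r_one H2" using 4 memR' w by metis
      then have "lay (\<phi> (u,False,False)) \<noteq> lay (\<phi> (v,False,False))" using DL_eq[of H2] by blast
      then show ?thesis using Lphi by (simp_all add: lay_def)
    next
      case 5
      have "(\<phi> (u,False,False), \<phi> (v,False,False)) \<in> r_minus_one H2" using 5 memR' w by metis
      then have "lay (\<phi> (u,False,False)) \<noteq> lay (\<phi> (v,False,False))" using DL_eq[of H2] by blast
      then show ?thesis using Lphi by (simp_all add: lay_def)
    qed
  qed
  have iso\<sigma>: "\<sigma> a \<in> Iso_grp S" for a
  proof -
    have "rel_image (\<sigma> a) s \<in> S" if sS: "s \<in> S" for s
    proof -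
      obtain s' where "s' \<in> S" "\<forall>a. rel_image (\<sigma> a) s = s'" using step6[OF sS] by blast
      then show ?thesis by simp
    qed
    then show ?thesis using b\<sigma>[of a] by (simp add: Iso_grp_def)
  qed
  have same: "rel_image (\<sigma> True) s = rel_image (\<sigma> False) s" if "s \<in> S" for s
    using step6[OF that] by auto
  define cc :: real where "cc = (if ?R (r_one H1) = r_one H2 then 1 else -1)"
  have rel: "transp_if e H2 $ (\<sigma> False x) $ (\<sigma> True y) = cc * sg (\<epsilon> False x) * sg (\<epsilon> True y) * H1 $ x $ y" for x y
  proof -
    define b0 where "b0 = (H1$x$y = -1)"
    have h1: "H1 $ x $ y = sg b0" unfolding b0_def by (rule ent_sg[OF e1])
    have "((x,False,b0),(y,True,False)) \<in> r_one H1" using h1 by (simp add: mem_r1 transp_if_entry sg_def)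
    then have inR: "(\<phi> (x,False,b0), \<phi> (y,True,False)) \<in> ?R (r_one H1)" using memR' by metis
    have G: "transp_if e H2 $ (\<sigma> False x) $ (\<sigma> True y) = 1 \<or> transp_if e H2 $ (\<sigma> False x) $ (\<sigma> True y) = -1"
      using ent_transp_if[OF e2, of e] unfolding ent_def by blast
    show ?thesis
    proof (cases "?R (r_one H1) = r_one H2")
      case True
      then have "transp_if e H2 $ (\<sigma> False x) $ (\<sigma> True y) = sg (b0 \<noteq> \<epsilon> False x) * sg (\<epsilon> True y)"
        using inR by (simp add: phiform mem_r1)
      then show ?thesis using True h1 unfolding cc_def
        by (cases b0; cases "\<epsilon> False x"; cases "\<epsilon> True y") (simp_all add: sg_def)
    next
      case False
      then have F: "?R (r_one H1) = r_minus_one H2" using r1m by blast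
      then have "transp_if e H2 $ (\<sigma> False x) $ (\<sigma> True y) \<noteq> sg (b0 \<noteq> \<epsilon> False x) * sg (\<epsilon> True y)"
        using inR by (simp add: phiform mem_rm1)
      then show ?thesis using False h1 G unfolding cc_def
        by (cases b0; cases "\<epsilon> False x"; cases "\<epsilon> True y") (auto simp add: sg_def)
    qed
  qed
  define \<beta> where "\<beta> = inv (\<sigma> False)"
  define \<alpha> where "\<alpha> = inv (\<sigma> True)"
  define p' where "p' = (\<lambda>k. cc * sg (\<epsilon> False k))"
  define q' where "q' = (\<lambda>k. sg (\<epsilon> True k))"
  have pm1p: "pm1 p'" unfolding pm1_def p'_def cc_def sg_def by auto
  have pm1q: "pm1 q'" unfolding pm1_def q'_def sg_def by auto
  have b\<beta>: "bij \<beta>" and b\<alpha>: "bij \<alpha>" unfolding \<beta>_def \<alpha>_def using b\<sigma> by (auto simp: bij_imp_bij_inv)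
  have i\<beta>: "\<beta> \<in> Iso_grp S" and i\<alpha>: "\<alpha> \<in> Iso_grp S" unfolding \<beta>_def \<alpha>_def using iso_inv iso\<sigma> by auto
  have sb: "\<And>i. \<sigma> False (\<beta> i) = i" unfolding \<beta>_def using b\<sigma>[of False] by (meson bij_inv_eq_iff)
  have sa: "\<And>i. \<sigma> True (\<alpha> i) = i" unfolding \<alpha>_def using b\<sigma>[of True] by (meson bij_inv_eq_iff)
  have bs: "\<And>x. \<beta> (\<sigma> False x) = x" unfolding \<beta>_def using b\<sigma>[of False] by (simp add: bij_is_inj)
  have Meq: "transp_if e H2 = matrix_inv (sdiag p' ** perm_mat \<beta>) ** H1 ** (sdiag q' ** perm_mat \<alpha>)"
  proof (rule mat_eqI)
    fix i j
    have "transp_if e H2 $ i $ j = transp_if e H2 $ (\<sigma> False (\<beta> i)) $ (\<sigma> True (\<alpha> j))" by (simp add: sb sa)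
    also have "\<dots> = p' (\<beta> i) * H1 $ (\<beta> i) $ (\<alpha> j) * q' (\<alpha> j)" unfolding rel p'_def q'_def by simp
    also have "\<dots> = (matrix_inv (sdiag p' ** perm_mat \<beta>) ** H1 ** (sdiag q' ** perm_mat \<alpha>)) $ i $ j"
      by (rule sim_entry[OF b\<beta> pm1p, symmetric])
    finally show "transp_if e H2 $ i $ j = \<dots>" .
  qed
  define \<rho> where "\<rho> = \<sigma> False \<circ> \<alpha>"
  define d where "d = (\<lambda>i. p' (\<beta> i) * q' (\<beta> i))"
  have pm1d: "pm1 d" using pm1p pm1q unfolding pm1_def d_def by (metis mult_1 mult_minus1 minus_minus)
  have Deq: "matrix_inv (sdiag p' ** perm_mat \<beta>) ** (sdiag q' ** perm_mat \<alpha>) = sdiag d ** perm_mat \<rho>"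
  proof (rule mat_eqI)
    fix i j
    have iff: "(i = \<rho> j) \<longleftrightarrow> (\<beta> i = \<alpha> j)" unfolding \<rho>_def comp_def
    proof
      assume "i = \<sigma> False (\<alpha> j)" then show "\<beta> i = \<alpha> j" using bs by simp
    next
      assume "\<beta> i = \<alpha> j" then have "\<sigma> False (\<beta> i) = \<sigma> False (\<alpha> j)" by simp
      then show "i = \<sigma> False (\<alpha> j)" using sb by simp
    qed
    show "(matrix_inv (sdiag p' ** perm_mat \<beta>) ** (sdiag q' ** perm_mat \<alpha>)) $ i $ j = (sdiag d ** perm_mat \<rho>) $ i $ j"
      unfolding sim_entry2[OF b\<beta> pm1p] sdiag_perm_entry
      using iff by (auto simp: d_def \<rho>_def bs)
  qed
  have a\<rho>: "\<rho> \<in> Aut_grp S"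
  proof -
    have "bij \<rho>" unfolding \<rho>_def using b\<sigma> b\<alpha> by (simp add: bij_comp)
    moreover have "rel_image \<rho> s = s" if s: "s \<in> S" for s
    proof -
      have s0: "rel_image \<alpha> s \<in> S" using i\<alpha> s by (simp add: Iso_grp_def)
      have "rel_image \<rho> s = rel_image (\<sigma> False) (rel_image \<alpha> s)" by (simp add: \<rho>_def rel_image_comp)
      also have "\<dots> = rel_image (\<sigma> True) (rel_image \<alpha> s)" using same[OF s0] by simp
      also have "\<dots> = s" unfolding \<alpha>_def by (rule rel_image_cancel_inv[OF b\<sigma>])
      finally show ?thesis .
    qed
    ultimately show ?thesis by (simp add: Aut_grp_def)
  qed
  show ?thesis unfolding hadamard_similar_def
  proof (intro exI conjI)
    show "sdiag p' \<in> sign_diags" by (rule sign_diagsI[OF pm1p])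
    show "sdiag q' \<in> sign_diags" by (rule sign_diagsI[OF pm1q])
    show "perm_mat \<beta> \<in> perm_mats (Iso_grp S)" using i\<beta> by (simp add: perm_mats_def)
    show "perm_mat \<alpha> \<in> perm_mats (Iso_grp S)" using i\<alpha> by (simp add: perm_mats_def)
    show "H2 = matrix_inv (sdiag p' ** perm_mat \<beta>) ** H1 ** (sdiag q' ** perm_mat \<alpha>) \<or>
      transpose H2 = matrix_inv (sdiag p' ** perm_mat \<beta>) ** H1 ** (sdiag q' ** perm_mat \<alpha>)"
      using Meq by (cases e) (simp_all add: transp_if_def)
    show "matrix_inv (sdiag p' ** perm_mat \<beta>) ** (sdiag q' ** perm_mat \<alpha>) \<in> semidirect_D (Aut_grp S)"
      unfolding Deq semidirect_D_def using sign_diagsI[OF pm1d] a\<rho> by (auto simp: perm_mats_def)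
  qed
qed


lemma hadamard_ent: "hadamard H \<Longrightarrow> ent H"
  by (simp add: hadamard_def ent_def)

theorem theorem1p2:
  fixes S :: "('a::finite \<times> 'a) set set"
    and H1 H2 :: "real^'a^'a"
  assumes "assoc_scheme (UNIV :: 'a set) S"
    and "CARD('a) > 1"
    and "hadamard H1" and "hadamard H2"
  shows "schemes_isomorphic (UNIV :: ('a \<times> bool \<times> bool) set) (S_of S H1) UNIV (S_of S H2)
         \<longleftrightarrow> hadamard_similar S H1 H2"
proof
  assume "schemes_isomorphic (UNIV :: ('a \<times> bool \<times> bool) set) (S_of S H1) UNIV (S_of S H2)"
  then obtain \<phi> where "scheme_iso UNIV (S_of S H1) UNIV (S_of S H2) \<phi>"
    unfolding schemes_isomorphic_def by blast
  then show "hadamard_similar S H1 H2"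
    using fwd assms hadamard_ent by blast
next
  assume "hadamard_similar S H1 H2"
  then show "schemes_isomorphic (UNIV :: ('a \<times> bool \<times> bool) set) (S_of S H1) UNIV (S_of S H2)"
    using bwd assms(1) by blast
qed

end
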